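(* Let $E$ be a Banach space, $T\colon\ell^1\to E$ a continuous linear operator with $T(e_n)\neq0$ for all $n$, and $p>1$. If $T$ is $\frac1p$-power dominated, i.e. there exists $C>0$ with $$\Big\|\sum_{j\in F}x_j^{1/p}\,T(e_j)\Big\|_E^{p}\le C\sup_{N\subset F}\Big\|\sum_{j\in N}x_jT(e_j)\Big\|_E$$ for all finite $F\subset\mathbb N$ and $(x_j)_{j\in F}\subset[0,\infty)$, then $T$ is $\frac1p$-th power factorable with a continuous extension, i.e. $T$ admits a continuous linear extension $S\colon\ell^p\to E$.
   Context: $e_n=\chi_{\{n\}}$ denotes the $n$-th unit sequence; $\ell^1\subset\ell^p$ for $p>1$. *)

theory Defs
  imports "HOL-Analysis.Analysis"
begin

definition unit_seq :: "nat \<Rightarrow> nat \<Rightarrow> real" where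
  "unit_seq n = (\<lambda>k. if k = n then 1 else 0)"

definition lp_space :: "real \<Rightarrow> (nat \<Rightarrow> real) set" where
  "lp_space p = {x. summable (\<lambda>n. \<bar>x n\<bar> powr p)}"

definition lp_norm :: "real \<Rightarrow> (nat \<Rightarrow> real) \<Rightarrow> real" where
  "lp_norm p x = (\<Sum>n. \<bar>x n\<bar> powr p) powr (1 / p)"

definition bounded_linear_on_lp :: "real \<Rightarrow> ((nat \<Rightarrow> real) \<Rightarrow> 'e::real_normed_vector) \<Rightarrow> bool" where
  "bounded_linear_on_lp p T \<longleftrightarrow>
     (\<forall>x\<in>lp_space p. \<forall>y\<in>lp_space p. T (\<lambda>n. x n + y n) = T x + T y) \<and>
     (\<forall>x\<in>lp_space p. \<forall>c::real. T (\<lambda>n. c * x n) = c *\<^sub>R T x) \<and>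
     (\<exists>K. \<forall>x\<in>lp_space p. norm (T x) \<le> K * lp_norm p x)"

end

theory Submission
  imports Defs
begin

lemma abs_powr1: "\<bar>x::real\<bar> powr 1 = \<bar>x\<bar>" by simp

lemma l1_iff: "z \<in> lp_space 1 \<longleftrightarrow> summable (\<lambda>n. \<bar>z n\<bar>)"
  unfolding lp_space_def by simp

lemma l1_norm: "z \<in> lp_space 1 \<Longrightarrow> lp_norm 1 z = (\<Sum>n. \<bar>z n\<bar>)"
  unfolding lp_norm_def l1_iff by (simp add: suminf_nonneg)

lemma fin_l1: "finite F \<Longrightarrow> (\<lambda>k. if k \<in> F then a k else 0) \<in> lp_space 1"
  unfolding l1_iff by (rule summable_finite[of F]) auto

lemma powr_root_le:
  fixes a c p :: real
  assumes "0 \<le> a" "0 \<le> c" "p > 0" "a powr p \<le> c"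
  shows "a \<le> c powr (1/p)"
proof -
  have "a = (a powr p) powr (1/p)" using assms by (simp add: powr_powr)
  also have "\<dots> \<le> c powr (1/p)" using assms by (intro powr_mono2) auto
  finally show ?thesis .
qed

lemma sum_powr_le:
  fixes a b p :: real
  assumes "0 \<le> a" "0 \<le> b" "p > 0"
  shows "(a + b) powr p \<le> 2 powr p * (a powr p + b powr p)"
proof -
  have "(a + b) powr p \<le> (2 * max a b) powr p" using assms by (intro powr_mono2) auto
  also have "\<dots> = 2 powr p * (max a b) powr p" using assms by (simp add: powr_mult)
  also have "(max a b) powr p \<le> a powr p + b powr p"
    by (cases "a \<le> b") (auto simp: max_def)
  hence "2 powr p * (max a b) powr p \<le> 2 powr p * (a powr p + b powr p)"
    by (intro mult_left_mono) auto
  finally show ?thesis .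
qed

lemma pos_bound:
  fixes v :: "nat \<Rightarrow> 'e::real_normed_vector"
  assumes p: "p > 1" and C: "C > 0" and K: "\<And>j. norm (v j) \<le> K" "K \<ge> 0"
    and dom: "\<forall>F x. finite F \<longrightarrow> (\<forall>j\<in>F. x j \<ge> (0::real)) \<longrightarrow>
        norm (\<Sum>j\<in>F. x j powr (1 / p) *\<^sub>R v j) powr p
          \<le> C * (SUP N\<in>Pow F. norm (\<Sum>j\<in>N. x j *\<^sub>R v j))"
    and F: "finite F" and y: "\<forall>j\<in>F. y j \<ge> 0"
  shows "norm (\<Sum>j\<in>F. y j *\<^sub>R v j) powr p \<le> C * K * (\<Sum>j\<in>F. y j powr p)"
proof -
  define x where "x j = y j powr p" for j
  have x0: "\<forall>j\<in>F. x j \<ge> 0" unfolding x_def by auto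
  have xr: "x j powr (1/p) = y j" if "j \<in> F" for j
    using y that p unfolding x_def by (simp add: powr_powr)
  have "norm (\<Sum>j\<in>F. y j *\<^sub>R v j) = norm (\<Sum>j\<in>F. x j powr (1 / p) *\<^sub>R v j)"
    by (simp add: xr)
  hence 1: "norm (\<Sum>j\<in>F. y j *\<^sub>R v j) powr p \<le> C * (SUP N\<in>Pow F. norm (\<Sum>j\<in>N. x j *\<^sub>R v j))"
    using dom F x0 by metis
  have "(SUP N\<in>Pow F. norm (\<Sum>j\<in>N. x j *\<^sub>R v j)) \<le> K * (\<Sum>j\<in>F. x j)"
  proof (rule cSUP_least)
    show "Pow F \<noteq> {}" by auto
  next
    fix N assume N: "N \<in> Pow F"
    have "norm (\<Sum>j\<in>N. x j *\<^sub>R v j) \<le> (\<Sum>j\<in>N. norm (x j *\<^sub>R v j))" by (rule norm_sum)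
    also have "\<dots> \<le> (\<Sum>j\<in>N. x j * K)"
    proof (rule sum_mono)
      fix j assume "j \<in> N"
      hence "x j \<ge> 0" using N x0 by auto
      thus "norm (x j *\<^sub>R v j) \<le> x j * K" using K by (simp add: mult_left_mono)
    qed
    also have "\<dots> \<le> (\<Sum>j\<in>F. x j * K)"
      using N x0 K F by (intro sum_mono2) auto
    finally show "norm (\<Sum>j\<in>N. x j *\<^sub>R v j) \<le> K * (\<Sum>j\<in>F. x j)"
      by (simp add: sum_distrib_left mult.commute)
  qed
  hence "C * (SUP N\<in>Pow F. norm (\<Sum>j\<in>N. x j *\<^sub>R v j)) \<le> C * (K * (\<Sum>j\<in>F. x j))"
    using C by (intro mult_left_mono) auto
  with 1 show ?thesis unfolding x_def by simp
qed

lemma signed_bound: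
  fixes v :: "nat \<Rightarrow> 'e::real_normed_vector"
  assumes p: "p > 1" and C: "C > 0" and K: "\<And>j. norm (v j) \<le> K" "K \<ge> 0"
    and dom: "\<forall>F x. finite F \<longrightarrow> (\<forall>j\<in>F. x j \<ge> (0::real)) \<longrightarrow>
        norm (\<Sum>j\<in>F. x j powr (1 / p) *\<^sub>R v j) powr p
          \<le> C * (SUP N\<in>Pow F. norm (\<Sum>j\<in>N. x j *\<^sub>R v j))"
    and F: "finite F"
  shows "norm (\<Sum>j\<in>F. y j *\<^sub>R v j) powr p \<le> 2 powr p * (C * K) * (\<Sum>j\<in>F. \<bar>y j\<bar> powr p)"
proof -
  define a where "a j = max (y j) 0" for j
  define b where "b j = max (- y j) 0" for j
  have eq: "(\<Sum>j\<in>F. y j *\<^sub>R v j) = (\<Sum>j\<in>F. a j *\<^sub>R v j) - (\<Sum>j\<in>F. b j *\<^sub>R v j)"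
  proof -
    have "y j = a j - b j" for j unfolding a_def b_def by (auto simp: max_def)
    hence "y j *\<^sub>R v j = a j *\<^sub>R v j - b j *\<^sub>R v j" for j by (simp add: scaleR_diff_left)
    thus ?thesis by (simp add: sum_subtractf)
  qed
  define A where "A = norm (\<Sum>j\<in>F. a j *\<^sub>R v j)"
  define B where "B = norm (\<Sum>j\<in>F. b j *\<^sub>R v j)"
  have A: "A powr p \<le> C * K * (\<Sum>j\<in>F. a j powr p)" unfolding A_def
    by (rule pos_bound[OF p C K dom F]) (auto simp: a_def)
  have B: "B powr p \<le> C * K * (\<Sum>j\<in>F. b j powr p)" unfolding B_def
    by (rule pos_bound[OF p C K dom F]) (auto simp: b_def)
  have pw: "a j powr p + b j powr p = \<bar>y j\<bar> powr p" for j
    unfolding a_def b_def by (auto simp: max_def)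
  have "norm (\<Sum>j\<in>F. y j *\<^sub>R v j) \<le> A + B" unfolding eq A_def B_def by (rule norm_triangle_ineq4)
  hence "norm (\<Sum>j\<in>F. y j *\<^sub>R v j) powr p \<le> (A + B) powr p"
    using p by (intro powr_mono2) auto
  also have "\<dots> \<le> 2 powr p * (A powr p + B powr p)"
    using p by (intro sum_powr_le) (auto simp: A_def B_def)
  also have "\<dots> \<le> 2 powr p * (C * K * (\<Sum>j\<in>F. a j powr p) + C * K * (\<Sum>j\<in>F. b j powr p))"
    using A B by (intro mult_left_mono) auto
  also have "\<dots> = 2 powr p * (C * K) * (\<Sum>j\<in>F. \<bar>y j\<bar> powr p)"
    by (simp add: distrib_left[symmetric] sum.distrib[symmetric] pw algebra_simps)
  finally show ?thesis .
qed

theorem lemma7p5: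
  fixes T :: "(nat \<Rightarrow> real) \<Rightarrow> 'e::banach" and p :: real
  assumes T_cont: "bounded_linear_on_lp 1 T"
    and T_nonzero: "\<And>n. T (unit_seq n) \<noteq> 0"
    and p_gt: "p > 1"
    and dominated: "\<exists>C>0. \<forall>F x. finite F \<longrightarrow> (\<forall>j\<in>F. x j \<ge> (0::real)) \<longrightarrow>
        norm (\<Sum>j\<in>F. x j powr (1 / p) *\<^sub>R T (unit_seq j)) powr p
          \<le> C * (SUP N\<in>Pow F. norm (\<Sum>j\<in>N. x j *\<^sub>R T (unit_seq j)))"
  shows "\<exists>S :: (nat \<Rightarrow> real) \<Rightarrow> 'e. bounded_linear_on_lp p S \<and> (\<forall>x\<in>lp_space 1. S x = T x)"
proof -
  obtain C where C: "C > 0" and dom: "\<forall>F x. finite F \<longrightarrow> (\<forall>j\<in>F. x j \<ge> (0::real)) \<longrightarrow>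
        norm (\<Sum>j\<in>F. x j powr (1 / p) *\<^sub>R T (unit_seq j)) powr p
          \<le> C * (SUP N\<in>Pow F. norm (\<Sum>j\<in>N. x j *\<^sub>R T (unit_seq j)))"
    using dominated by blast
  have add: "\<And>x y. x \<in> lp_space 1 \<Longrightarrow> y \<in> lp_space 1 \<Longrightarrow> T (\<lambda>n. x n + y n) = T x + T y"
    and hom: "\<And>x c. x \<in> lp_space 1 \<Longrightarrow> T (\<lambda>n. c * x n) = c *\<^sub>R T x"
    using T_cont unfolding bounded_linear_on_lp_def by auto
  obtain K0 where K0: "\<And>x. x \<in> lp_space 1 \<Longrightarrow> norm (T x) \<le> K0 * lp_norm 1 x"
    using T_cont unfolding bounded_linear_on_lp_def by blast
  define v where "v j = T (unit_seq j)" for j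
  have ul1: "unit_seq j \<in> lp_space 1" for j
  proof -
    have "unit_seq j = (\<lambda>k. if k \<in> {j} then 1 else 0)" unfolding unit_seq_def by auto
    thus ?thesis using fin_l1[of "{j}" "\<lambda>_. 1"] by simp
  qed
  have un: "lp_norm 1 (unit_seq j) = 1" for j
  proof -
    have "(\<Sum>n. \<bar>unit_seq j n\<bar>) = (\<Sum>n\<in>{j}. \<bar>unit_seq j n\<bar>)"
      by (rule suminf_finite) (auto simp: unit_seq_def)
    thus ?thesis using l1_norm[OF ul1] by (simp add: unit_seq_def)
  qed
  have nv0: "norm (v j) \<le> K0" for j using K0[OF ul1, of j] un unfolding v_def by simp
  define K where "K = max K0 0"
  have K: "\<And>j. norm (v j) \<le> K" "K \<ge> 0" using nv0 unfolding K_def by (auto intro: order_trans[OF _ max.cobounded1])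
  have Kb: "norm (T x) \<le> K * lp_norm 1 x" if "x \<in> lp_space 1" for x
  proof -
    have "lp_norm 1 x \<ge> 0" unfolding lp_norm_def by simp
    hence "K0 * lp_norm 1 x \<le> K * lp_norm 1 x" unfolding K_def by (intro mult_right_mono) auto
    thus ?thesis using K0[OF that] by linarith
  qed
  have dom': "\<forall>F x. finite F \<longrightarrow> (\<forall>j\<in>F. x j \<ge> (0::real)) \<longrightarrow>
        norm (\<Sum>j\<in>F. x j powr (1 / p) *\<^sub>R v j) powr p
          \<le> C * (SUP N\<in>Pow F. norm (\<Sum>j\<in>N. x j *\<^sub>R v j))"
    using dom unfolding v_def .
  define B where "B = 2 powr p * (C * K)"
  have B0: "B \<ge> 0" unfolding B_def using C K by simp
  have SB: "norm (\<Sum>j\<in>F. y j *\<^sub>R v j) powr p \<le> B * (\<Sum>j\<in>F. \<bar>y j\<bar> powr p)" if "finite F" for F y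
    unfolding B_def by (rule signed_bound[OF p_gt C K dom' that])
  have p0: "p > 0" using p_gt by simp
  have summ: "summable (\<lambda>j. y j *\<^sub>R v j)" if y: "y \<in> lp_space p" for y
  proof -
    define g where "g n = \<bar>y n\<bar> powr p" for n
    have g: "summable g" using y unfolding g_def lp_space_def by simp
    show ?thesis unfolding summable_Cauchy
    proof (intro allI impI)
      fix e :: real assume e: "e > 0"
      define e' where "e' = e powr p / (B + 1)"
      have e': "e' > 0" unfolding e'_def using e B0 by simp
      obtain N where N: "\<forall>m\<ge>N. \<forall>n. norm (sum g {m..<n}) < e'"
        using g e' unfolding summable_Cauchy by blast
      have "norm (\<Sum>j\<in>{m..<n}. y j *\<^sub>R v j) < e" if "m \<ge> N" for m n
      proof (rule ccontr)
        assume neg: "\<not> ?thesis"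
        have sg0: "sum g {m..<n} \<ge> 0" unfolding g_def by (intro sum_nonneg) auto
        have "norm (sum g {m..<n}) < e'" using N that by blast
        hence "sum g {m..<n} \<le> e'" using sg0 by simp
        hence Be: "B * sum g {m..<n} \<le> B * e'" using B0 by (rule mult_left_mono)
        have "e powr p \<le> norm (\<Sum>j\<in>{m..<n}. y j *\<^sub>R v j) powr p"
          using neg e p0 by (intro powr_mono2) auto
        also have "\<dots> \<le> B * sum g {m..<n}" using SB[of "{m..<n}" y] unfolding g_def by simp
        also note Be
        also have "B * e' < e powr p" unfolding e'_def using e B0
          by (simp add: field_simps)
        finally show False by simp
      qed
      thus "\<exists>N. \<forall>m\<ge>N. \<forall>n. norm (\<Sum>j\<in>{m..<n}. y j *\<^sub>R v j) < e" by blast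
    qed
  qed
  define S where "S y = (\<Sum>j. y j *\<^sub>R v j)" for y
  have Slin: "bounded_linear_on_lp p S"
    unfolding bounded_linear_on_lp_def
  proof (intro conjI ballI allI)
    fix x y assume x: "x \<in> lp_space p" and y: "y \<in> lp_space p"
    show "S (\<lambda>n. x n + y n) = S x + S y"
      unfolding S_def using suminf_add[OF summ[OF x] summ[OF y]] by (simp add: scaleR_add_left)
  next
    fix x c assume x: "x \<in> lp_space p"
    show "S (\<lambda>n. c * x n) = c *\<^sub>R S x"
      unfolding S_def using suminf_scaleR_right[OF summ[OF x], of c] by simp
  next
    show "\<exists>K. \<forall>x\<in>lp_space p. norm (S x) \<le> K * lp_norm p x"
    proof (intro exI ballI)
      fix y assume y: "y \<in> lp_space p"
      define g where "g n = \<bar>y n\<bar> powr p" for n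
      have g: "summable g" using y unfolding g_def lp_space_def by simp
      have g0: "\<And>n. g n \<ge> 0" unfolding g_def by simp
      have "norm (\<Sum>j<n. y j *\<^sub>R v j) \<le> (B * suminf g) powr (1/p)" for n
      proof (rule powr_root_le)
        show "0 \<le> B * suminf g" using B0 g g0 by (simp add: suminf_nonneg)
        have "norm (\<Sum>j<n. y j *\<^sub>R v j) powr p \<le> B * sum g {..<n}"
          using SB[of "{..<n}" y] unfolding g_def by simp
        also have "\<dots> \<le> B * suminf g" using B0 g g0 by (intro mult_left_mono sum_le_suminf) auto
        finally show "norm (\<Sum>j<n. y j *\<^sub>R v j) powr p \<le> B * suminf g" .
      qed (use p0 in auto)
      hence "norm (S y) \<le> (B * suminf g) powr (1/p)"
        unfolding S_def
        by (intro LIMSEQ_le_const2[OF tendsto_norm[OF summable_LIMSEQ[OF summ[OF y]]]]) auto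
      also have "\<dots> = B powr (1/p) * lp_norm p y"
        unfolding lp_norm_def g_def using B0 g0 by (simp add: powr_mult suminf_nonneg g[unfolded g_def])
      finally show "norm (S y) \<le> B powr (1/p) * lp_norm p y" .
    qed
  qed
  have finT: "finite F \<Longrightarrow> T (\<lambda>k. if k \<in> F then a k else 0) = (\<Sum>j\<in>F. a j *\<^sub>R v j)" for F a
  proof (induction F rule: finite_induct)
    case empty
    have "T (\<lambda>k. 0 * unit_seq 0 k) = 0 *\<^sub>R T (unit_seq 0)" by (rule hom[OF ul1])
    thus ?case by simp
  next
    case (insert j F)
    have "(\<lambda>k. if k \<in> insert j F then a k else 0) =
          (\<lambda>k. (a j * unit_seq j k) + (if k \<in> F then a k else 0))"
      using insert(2) by (auto simp: unit_seq_def)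
    moreover have "(\<lambda>k. a j * unit_seq j k) \<in> lp_space 1"
    proof -
      have "(\<lambda>k. a j * unit_seq j k) = (\<lambda>k. if k \<in> {j} then a j else 0)" by (auto simp: unit_seq_def)
      thus ?thesis using fin_l1[of "{j}" "\<lambda>_. a j"] by simp
    qed
    ultimately have "T (\<lambda>k. if k \<in> insert j F then a k else 0) =
        T (\<lambda>k. a j * unit_seq j k) + T (\<lambda>k. if k \<in> F then a k else 0)"
      using add fin_l1[OF insert(1)] by simp
    also have "T (\<lambda>k. a j * unit_seq j k) = a j *\<^sub>R v j" unfolding v_def by (rule hom[OF ul1])
    finally show ?case using insert by simp
  qed
  have ext: "S x = T x" if x: "x \<in> lp_space 1" for x
  proof -
    have ax: "summable (\<lambda>n. \<bar>x n\<bar>)" using x l1_iff by blast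
    have sx: "summable (\<lambda>j. x j *\<^sub>R v j)"
    proof (rule summable_comparison_test)
      show "\<exists>N. \<forall>n\<ge>N. norm (x n *\<^sub>R v n) \<le> K * \<bar>x n\<bar>"
      proof (intro exI allI impI)
        fix n :: nat
        have "\<bar>x n\<bar> * norm (v n) \<le> \<bar>x n\<bar> * K" using K(1)[of n] by (rule mult_left_mono) simp
        thus "norm (x n *\<^sub>R v n) \<le> K * \<bar>x n\<bar>" by (simp add: mult.commute)
      qed
      show "summable (\<lambda>n. K * \<bar>x n\<bar>)" using ax by (rule summable_mult)
    qed
    define tr where "tr n = (\<lambda>k. if k \<in> {..<n} then x k else 0)" for n
    define tl where "tl n = (\<lambda>k. if k \<in> {..<n} then 0 else x k)" for n
    have trl: "tr n \<in> lp_space 1" for n unfolding tr_def by (rule fin_l1) auto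
    have tl1: "summable (\<lambda>k. \<bar>tl n k\<bar>)" for n
      by (rule summable_comparison_test[OF _ ax]) (auto simp: tl_def)
    hence tll: "tl n \<in> lp_space 1" for n using l1_iff by blast
    have Ttr: "T (tr n) = (\<Sum>j<n. x j *\<^sub>R v j)" for n unfolding tr_def by (rule finT) auto
    have split: "T x = T (tr n) + T (tl n)" for n
    proof -
      have "x = (\<lambda>k. tr n k + tl n k)" unfolding tr_def tl_def by auto
      hence "T x = T (\<lambda>k. tr n k + tl n k)" by simp
      thus ?thesis using add[OF trl tll] by simp
    qed
    have tlsum: "(\<Sum>k. \<bar>tl n k\<bar>) = (\<Sum>k. \<bar>x k\<bar>) - (\<Sum>k<n. \<bar>x k\<bar>)" for n
    proof -
      have "(\<Sum>k. \<bar>tr n k\<bar>) = (\<Sum>k<n. \<bar>tr n k\<bar>)"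
        by (rule suminf_finite) (auto simp: tr_def)
      also have "\<dots> = (\<Sum>k<n. \<bar>x k\<bar>)" by (rule sum.cong) (auto simp: tr_def)
      finally have e1: "(\<Sum>k. \<bar>tr n k\<bar>) = (\<Sum>k<n. \<bar>x k\<bar>)" .
      have str: "summable (\<lambda>k. \<bar>tr n k\<bar>)" using trl l1_iff by blast
      have "(\<Sum>k. \<bar>x k\<bar>) - (\<Sum>k. \<bar>tr n k\<bar>) = (\<Sum>k. \<bar>x k\<bar> - \<bar>tr n k\<bar>)"
        by (rule suminf_diff[OF ax str])
      also have "(\<lambda>k. \<bar>x k\<bar> - \<bar>tr n k\<bar>) = (\<lambda>k. \<bar>tl n k\<bar>)" by (auto simp: tr_def tl_def)
      finally show ?thesis using e1 by simp
    qed
    have "(\<lambda>n. (\<Sum>k<n. \<bar>x k\<bar>)) \<longlonglongrightarrow> (\<Sum>k. \<bar>x k\<bar>)" by (rule summable_LIMSEQ[OF ax])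
    hence "(\<lambda>n. (\<Sum>k. \<bar>x k\<bar>) - (\<Sum>k<n. \<bar>x k\<bar>)) \<longlonglongrightarrow> (\<Sum>k. \<bar>x k\<bar>) - (\<Sum>k. \<bar>x k\<bar>)"
      by (intro tendsto_diff tendsto_const)
    hence "(\<lambda>n. K * ((\<Sum>k. \<bar>x k\<bar>) - (\<Sum>k<n. \<bar>x k\<bar>))) \<longlonglongrightarrow> K * 0"
      by (intro tendsto_mult tendsto_const) simp
    hence lim0: "(\<lambda>n. K * ((\<Sum>k. \<bar>x k\<bar>) - (\<Sum>k<n. \<bar>x k\<bar>))) \<longlonglongrightarrow> 0" by simp
    have ev: "\<forall>\<^sub>F n in sequentially. norm (T (tl n)) \<le> K * ((\<Sum>k. \<bar>x k\<bar>) - (\<Sum>k<n. \<bar>x k\<bar>))"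
      using Kb[OF tll] l1_norm[OF tll] tlsum by simp
    have "(\<lambda>n. T (tl n)) \<longlonglongrightarrow> 0" by (rule Lim_null_comparison[OF ev lim0])
    hence "(\<lambda>n. T x - T (tl n)) \<longlonglongrightarrow> T x - 0" by (intro tendsto_diff tendsto_const)
    hence "(\<lambda>n. (\<Sum>j<n. x j *\<^sub>R v j)) \<longlonglongrightarrow> T x"
    proof -
      have "T x - T (tl n) = (\<Sum>j<n. x j *\<^sub>R v j)" for n using split[of n] Ttr[of n] by simp
      thus ?thesis using \<open>(\<lambda>n. T x - T (tl n)) \<longlonglongrightarrow> T x - 0\<close> by simp
    qed
    moreover have "(\<lambda>n. (\<Sum>j<n. x j *\<^sub>R v j)) \<longlonglongrightarrow> S x" unfolding S_def by (rule summable_LIMSEQ[OF sx])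
    ultimately show ?thesis using LIMSEQ_unique by blast
  qed
  show ?thesis using Slin ext by blast
qed

end
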